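(* Let $N\ge1$, generic complex $q,\gamma,s_0,\xi_0$, and $u_i,v_j$ with $|u_iv_j|<1$ for all $i,j$. Then $$\frac{\det[\mathsf z(u_i,v_j)]_{i,j=1}^N}{\prod_{1\le i<j\le N}(u_i-u_j)(v_i-v_j)}=\sum_{\lambda\in\mathrm{Sign}_N}\mathsf C_\lambda(u_1,\dots,u_N)\,s_\lambda(v_1,\dots,v_N),$$ where $\mathsf C_\lambda$ is the symmetric polynomial $$\mathsf C_\lambda(u_1,\dots,u_N)=\frac{\det[\mathsf c_{\lambda_i+N-i}(u_j)]_{i,j=1}^N}{\prod_{1\le i<j\le N}(u_i-u_j)},$$ $$\mathsf c_k(u)=u^k\Big\{1-\gamma q^{k+1}+s_0^2\gamma(\gamma-q^k)-s_0\gamma\big((1-q^k)(u\xi_0)^{-1}+(1-q^{k+1})u\xi_0\big)\Big\},$$ and equivalently $$\mathsf C_\lambda=\det\Big[-\gamma s_0\xi_0^{-1}(1-q^{\lambda_j+N-j})h_{\lambda_j+i-j-1}+\big(1+\gamma^2s_0^2-\gamma(q+s_0^2)q^{\lambda_j+N-j}\big)h_{\lambda_j+i-j}-\gamma s_0\xi_0(1-q^{\lambda_j+N-j+1})h_{\lambda_j+i-j+1}\Big]_{i,j=1}^N,$$ with $h_k=h_k(u_1,\dots,u_N)$. In particular, when $s_0=0$, $\mathsf C_\lambda=\prod_{j=1}^N(1-\gamma q\cdot q^{\lambda_j+N-j})\,s_\lambda(u_1,\dots,u_N)$.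
   Context: $\mathrm{Sign}_N$ is the set of integer sequences $\lambda=(\lambda_1\ge\dots\ge\lambda_N\ge0)$. $\mathsf z(u,v)=\frac{(1-\gamma)(q-\gamma s_0^2)(1-uv)+(1-q)(1-\gamma\xi_0s_0u)(1-\gamma\xi_0^{-1}s_0v)}{(1-uv)(1-quv)}$. $s_\lambda(v_1,\dots,v_N)=\det[v_i^{\lambda_j+N-j}]/\prod_{i<j}(v_i-v_j)$ is the Schur polynomial, and $h_k$ is the complete homogeneous symmetric polynomial of degree $k$, with $h_0=1$ and $h_k=0$ for $k<0$. *)

theory Defs
  imports Complex_Main "HOL-Analysis.Infinite_Sum" "Jordan_Normal_Form.Determinant"
begin

text \<open>All indices are 0-based: i ranges over 0..N-1 (paper: 1..N).\<close>

definition Sign :: "nat \<Rightarrow> (nat \<Rightarrow> nat) set" where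
  "Sign N = {lam. (\<forall>i j. i \<le> j \<longrightarrow> j < N \<longrightarrow> lam j \<le> lam i) \<and> (\<forall>i\<ge>N. lam i = 0)}"

definition vandermonde :: "nat \<Rightarrow> (nat \<Rightarrow> complex) \<Rightarrow> complex" where
  "vandermonde N x = (\<Prod>j<N. \<Prod>i<j. (x i - x j))"

definition zfun :: "complex \<Rightarrow> complex \<Rightarrow> complex \<Rightarrow> complex \<Rightarrow> complex \<Rightarrow> complex \<Rightarrow> complex" where
  "zfun q \<gamma> s0 \<xi>0 u v =
     ((1 - \<gamma>) * (q - \<gamma> * s0^2) * (1 - u * v)
       + (1 - q) * (1 - \<gamma> * \<xi>0 * s0 * u) * (1 - \<gamma> * inverse \<xi>0 * s0 * v))
     / ((1 - u * v) * (1 - q * u * v))"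

definition schur :: "nat \<Rightarrow> (nat \<Rightarrow> nat) \<Rightarrow> (nat \<Rightarrow> complex) \<Rightarrow> complex" where
  "schur N lam v = det (mat N N (\<lambda>(i,j). v i ^ (lam j + (N - 1 - j)))) / vandermonde N v"

definition hcomplete :: "nat \<Rightarrow> int \<Rightarrow> (nat \<Rightarrow> complex) \<Rightarrow> complex" where
  "hcomplete N k u = (if k < 0 then 0 else
     (\<Sum>\<alpha>\<in>{\<alpha>::nat \<Rightarrow> nat. (\<forall>i\<ge>N. \<alpha> i = 0) \<and> int (\<Sum>i<N. \<alpha> i) = k}. \<Prod>i<N. u i ^ \<alpha> i))"

definition cfun :: "complex \<Rightarrow> complex \<Rightarrow> complex \<Rightarrow> complex \<Rightarrow> nat \<Rightarrow> complex \<Rightarrow> complex" where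
  "cfun q \<gamma> s0 \<xi>0 k u = u ^ k *
     (1 - \<gamma> * q ^ (k + 1) + s0^2 * \<gamma> * (\<gamma> - q ^ k)
      - s0 * \<gamma> * ((1 - q ^ k) * inverse (u * \<xi>0) + (1 - q ^ (k + 1)) * u * \<xi>0))"

definition Cfun :: "complex \<Rightarrow> complex \<Rightarrow> complex \<Rightarrow> complex \<Rightarrow> nat \<Rightarrow> (nat \<Rightarrow> nat) \<Rightarrow> (nat \<Rightarrow> complex) \<Rightarrow> complex" where
  "Cfun q \<gamma> s0 \<xi>0 N lam u =
     det (mat N N (\<lambda>(i,j). cfun q \<gamma> s0 \<xi>0 (lam i + (N - 1 - i)) (u j))) / vandermonde N u"

end

theory Submission
  imports Defs "HOL-Library.FuncSet"
begin


lemma det_mat_leibniz: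
  "det (mat n n (\<lambda>(i,j). f i j)) =
   (\<Sum>p | p permutes {..<n}. signof p * (\<Prod>i<n. f i (p i)))"
  by (subst det_def'[of _ n]) (auto simp: atLeast0LessThan intro!: sum.cong prod.cong)

lemma det_mat_transpose_fun:
  "det (mat n n (\<lambda>(i,j). f j i)) = det (mat n n (\<lambda>(i,j). f i j))"
proof -
  have "mat n n (\<lambda>(i,j). f j i) = (mat n n (\<lambda>(i,j). f i j))\<^sup>T"
    by (rule eq_matI) auto
  thus ?thesis using det_transpose[of "mat n n (\<lambda>(i,j). f i j)" n] by simp
qed

lemma det_mat_mult_fun:
  "det (mat n n (\<lambda>(i,j). \<Sum>k<n. f i k * g k j)) =
   det (mat n n (\<lambda>(i,j). f i j)) * det (mat n n (\<lambda>(i,j). g i j))"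
proof -
  have "mat n n (\<lambda>(i,j). \<Sum>k<n. f i k * g k j) = mat n n (\<lambda>(i,j). f i j) * mat n n (\<lambda>(i,j). g i j)"
    by (rule eq_matI) (auto simp: scalar_prod_def atLeast0LessThan intro!: sum.cong)
  thus ?thesis by (simp add: det_mult[of _ n])
qed

lemma det_mat_rowscale:
  "det (mat n n (\<lambda>(i,j). c i * f i j)) = (\<Prod>i<n. c i) * det (mat n n (\<lambda>(i,j). f i j))"
  unfolding det_mat_leibniz
  by (simp add: sum_distrib_left prod.distrib mult.assoc mult.left_commute)

lemma det_mat_lower_unit:
  assumes "\<And>i j. i < j \<Longrightarrow> j < n \<Longrightarrow> f i j = 0" "\<And>i. i < n \<Longrightarrow> f i i = 1"
  shows "det (mat n n (\<lambda>(i,j). f i j)) = 1"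
proof -
  have "det (mat n n (\<lambda>(i,j). f i j)) = prod_list (diag_mat (mat n n (\<lambda>(i,j). f i j)))"
    by (rule det_lower_triangular[of n]) (auto simp: assms)
  also have "diag_mat (mat n n (\<lambda>(i,j). f i j)) = replicate n 1"
    by (auto simp: diag_mat_def assms intro!: nth_equalityI)
  finally show ?thesis by simp
qed



lemma det_mat_colscale:
  "det (mat n n (\<lambda>(i,j). f i j * c j)) = (\<Prod>j<n. c j) * det (mat n n (\<lambda>(i,j). f i j))"
proof -
  have "det (mat n n (\<lambda>(i,j). f i j * c j)) = det (mat n n (\<lambda>(i,j). c i * f j i))"
    using det_mat_transpose_fun[of n "\<lambda>i j. c i * f j i"] by (simp add: mult.commute)
  also have "\<dots> = (\<Prod>j<n. c j) * det (mat n n (\<lambda>(i,j). f j i))" by (rule det_mat_rowscale)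
  also have "det (mat n n (\<lambda>(i,j). f j i)) = det (mat n n (\<lambda>(i,j). f i j))"
    by (rule det_mat_transpose_fun)
  finally show ?thesis .
qed

lemma det_last_col_unit:
  assumes "\<And>i. i < n \<Longrightarrow> B i n = 0" "B n n = 1"
  shows "det (mat (Suc n) (Suc n) (\<lambda>(i,j). B i j)) = det (mat n n (\<lambda>(i,j). B i j))"
proof -
  let ?A = "mat (Suc n) (Suc n) (\<lambda>(i,j). B i j)"
  have "det ?A = (\<Sum>i<Suc n. ?A $$ (i,n) * cofactor ?A i n)"
    by (rule laplace_expansion_column) auto
  also have "\<dots> = ?A $$ (n,n) * cofactor ?A n n"
    by (subst sum.remove[of _ n]) (auto simp: assms intro!: sum.neutral)
  also have "\<dots> = det (mat_delete ?A n n)" by (simp add: assms cofactor_def)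
  also have "mat_delete ?A n n = mat n n (\<lambda>(i,j). B i j)"
    by (rule eq_matI) (auto simp: mat_delete_def)
  finally show ?thesis .
qed

lemma vandermonde_Suc: "vandermonde (Suc n) x = vandermonde n x * (\<Prod>i<n. x i - x n)"
  by (simp add: vandermonde_def)

lemma det_vandermonde:
  "det (mat n n (\<lambda>(i,j). x j ^ (n - 1 - i))) = vandermonde n x"
proof (induction n)
  case 0
  then show ?case by (simp add: vandermonde_def det_def)
next
  case (Suc n)
  define f where "f i k = (if k = i then 1 else if k = Suc i then - x n else (0::complex))" for i k
  define g where "g k j = x j ^ (n - k)" for k j
  define B where "B i j = (if i < n then x j ^ (n - 1 - i) * (x j - x n) else 1)" for i j
  have fg: "(\<Sum>k<Suc n. f i k * g k j) = B i j" if "i < Suc n" "j < Suc n" for i j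
  proof -
    have "(\<Sum>k<Suc n. f i k * g k j) = (\<Sum>k<Suc n. (if k = i then g i j else 0)
          + (if k = Suc i then - x n * g (Suc i) j else 0))"
      by (rule sum.cong) (auto simp: f_def)
    also have "\<dots> = g i j + (if i < n then - x n * g (Suc i) j else 0)"
      using that by (simp add: sum.distrib)
    also have "\<dots> = B i j"
    proof (cases "i < n")
      case True
      then have "n - i = Suc (n - 1 - i)" by simp
      then show ?thesis using True by (simp add: g_def B_def algebra_simps)
    next
      case False
      then show ?thesis using that by (simp add: g_def B_def)
    qed
    finally show ?thesis .
  qed
  have detf: "det (mat (Suc n) (Suc n) (\<lambda>(i,j). f i j)) = 1"
  proof -
    have "det (mat (Suc n) (Suc n) (\<lambda>(i,j). f i j)) = det (mat (Suc n) (Suc n) (\<lambda>(i,j). f j i))"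
      by (rule det_mat_transpose_fun[symmetric])
    also have "\<dots> = 1" by (rule det_mat_lower_unit) (auto simp: f_def)
    finally show ?thesis .
  qed
  have "det (mat (Suc n) (Suc n) (\<lambda>(i,j). x j ^ (Suc n - 1 - i))) =
      det (mat (Suc n) (Suc n) (\<lambda>(i,j). \<Sum>k<Suc n. f i k * g k j))"
    using det_mat_mult_fun[of "Suc n" f g] detf by (simp add: g_def)
  also have "mat (Suc n) (Suc n) (\<lambda>(i,j). \<Sum>k<Suc n. f i k * g k j) = mat (Suc n) (Suc n) (\<lambda>(i,j). B i j)"
    by (rule eq_matI) (simp_all add: fg del: sum.lessThan_Suc)
  also have "det \<dots> = det (mat n n (\<lambda>(i,j). B i j))"
    by (rule det_last_col_unit) (auto simp: B_def)
  also have "mat n n (\<lambda>(i,j). B i j) = mat n n (\<lambda>(i,j). x j ^ (n - 1 - i) * (x j - x n))"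
    by (rule eq_matI) (auto simp: B_def)
  also have "det \<dots> = (\<Prod>j<n. x j - x n) * vandermonde n x"
    using det_mat_colscale[of n "\<lambda>i j. x j ^ (n - 1 - i)" "\<lambda>j. x j - x n"] Suc.IH by simp
  finally show ?case by (simp add: vandermonde_Suc mult.commute)
qed



definition hS :: "nat \<Rightarrow> nat \<Rightarrow> (nat \<Rightarrow> nat) set" where
  "hS n k = {\<alpha>::nat \<Rightarrow> nat. (\<forall>i\<ge>n. \<alpha> i = 0) \<and> (\<Sum>i<n. \<alpha> i) = k}"

definition hh :: "nat \<Rightarrow> nat \<Rightarrow> (nat \<Rightarrow> complex) \<Rightarrow> complex" where
  "hh n k u = (\<Sum>\<alpha>\<in>hS n k. \<Prod>i<n. u i ^ \<alpha> i)"

lemma hcomplete_nat: "hcomplete n (int k) u = hh n k u"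
proof -
  have "\<And>\<alpha>::nat\<Rightarrow>nat. (int (sum \<alpha> {..<n}) = int k) = (sum \<alpha> {..<n} = k)" by (rule of_nat_eq_iff)
  then show ?thesis unfolding hcomplete_def hh_def hS_def by (simp del: of_nat_sum)
qed

lemma hcomplete_neg: "k < 0 \<Longrightarrow> hcomplete n k u = 0"
  unfolding hcomplete_def by simp

lemma finite_hS: "finite (hS n k)"
proof -
  have "inj_on (\<lambda>\<alpha>. restrict \<alpha> {..<n}) (hS n k)"
  proof (rule inj_onI)
    fix a b assume a: "a \<in> hS n k" and b: "b \<in> hS n k" and e: "restrict a {..<n} = restrict b {..<n}"
    show "a = b"
    proof
      fix i show "a i = b i"
        using a b e by (cases "i < n") (auto simp: hS_def restrict_def fun_eq_iff split: if_splits)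
    qed
  qed
  moreover have "(\<lambda>\<alpha>. restrict \<alpha> {..<n}) ` hS n k \<subseteq> PiE {..<n} (\<lambda>_. {..k})"
  proof
    fix x assume "x \<in> (\<lambda>\<alpha>. restrict \<alpha> {..<n}) ` hS n k"
    then obtain a where a: "a \<in> hS n k" and x: "x = restrict a {..<n}" by auto
    have "a i \<le> k" if "i < n" for i
      using a that member_le_sum[of i "{..<n}" a] by (auto simp: hS_def)
    then show "x \<in> PiE {..<n} (\<lambda>_. {..k})" using x by auto
  qed
  ultimately show ?thesis
    by (meson finite_PiE finite_atMost finite_imageD finite_lessThan finite_subset)
qed

lemma hS_0: "hS 0 k = (if k = 0 then {\<lambda>_. 0} else {})"
  by (auto simp: hS_def)

lemma hh_0: "hh 0 k u = (if k = 0 then 1 else 0)"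
  by (simp add: hh_def hS_0)

lemma hh_Suc: "hh (Suc n) k u = (\<Sum>a\<le>k. u n ^ a * hh n (k - a) u)"
proof -
  have "hh (Suc n) k u = (\<Sum>(a,\<beta>)\<in>Sigma {..k} (\<lambda>a. hS n (k - a)). u n ^ a * (\<Prod>i<n. u i ^ \<beta> i))"
    unfolding hh_def
  proof (rule sum.reindex_bij_witness[where i = "\<lambda>(a,\<beta>). \<beta>(n := a)" and j = "\<lambda>\<alpha>. (\<alpha> n, \<alpha>(n := 0))"])
    fix ab assume "ab \<in> Sigma {..k} (\<lambda>a. hS n (k - a))"
    then obtain a b where ab: "ab = (a,b)" "a \<le> k" "b \<in> hS n (k - a)" by auto
    have bn: "b n = 0" using ab by (auto simp: hS_def)
    have s: "(\<Sum>i<n. (b(n := a)) i) = (\<Sum>i<n. b i)" by (rule sum.cong) auto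
    show "(case (case ab of (a, \<beta>) \<Rightarrow> \<beta>(n := a)) of \<alpha> \<Rightarrow> (\<alpha> n, \<alpha>(n := 0))) = ab"
      using ab bn by (auto simp: fun_eq_iff)
    show "(case ab of (a, \<beta>) \<Rightarrow> \<beta>(n := a)) \<in> hS (Suc n) k"
      using ab s by (auto simp: hS_def)
  next
    fix \<alpha> assume a: "\<alpha> \<in> hS (Suc n) k"
    have s: "(\<Sum>i<n. (\<alpha>(n := 0)) i) = (\<Sum>i<n. \<alpha> i)" by (rule sum.cong) auto
    show "(case (\<alpha> n, \<alpha>(n := 0)) of (a, \<beta>) \<Rightarrow> \<beta>(n := a)) = \<alpha>" by auto
    show "(\<alpha> n, \<alpha>(n := 0)) \<in> Sigma {..k} (\<lambda>a. hS n (k - a))"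
      using a s by (auto simp: hS_def)
    have p: "(\<Prod>i<n. u i ^ (\<alpha>(n := 0)) i) = (\<Prod>i<n. u i ^ \<alpha> i)" by (rule prod.cong) auto
    show "(case (\<alpha> n, \<alpha>(n := 0)) of (a, \<beta>) \<Rightarrow> u n ^ a * (\<Prod>i<n. u i ^ \<beta> i)) = (\<Prod>i<Suc n. u i ^ \<alpha> i)"
      using p by (simp add: mult.commute)
  qed
  also have "\<dots> = (\<Sum>a\<le>k. \<Sum>\<beta>\<in>hS n (k - a). u n ^ a * (\<Prod>i<n. u i ^ \<beta> i))"
    by (subst sum.Sigma) (auto simp: finite_hS)
  also have "\<dots> = (\<Sum>a\<le>k. u n ^ a * hh n (k - a) u)"
    by (simp add: hh_def sum_distrib_left)
  finally show ?thesis .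
qed

lemma hh_zero: "hh n 0 u = 1"
  by (induction n) (simp_all add: hh_0 hh_Suc)

lemma hh_rec: "hh (Suc n) (Suc k) u = hh n (Suc k) u + u n * hh (Suc n) k u"
proof -
  have "hh (Suc n) (Suc k) u = (\<Sum>a\<le>Suc k. u n ^ a * hh n (Suc k - a) u)" by (rule hh_Suc)
  also have "\<dots> = hh n (Suc k) u + (\<Sum>a\<le>k. u n ^ Suc a * hh n (Suc k - Suc a) u)"
    by (subst sum.atMost_Suc_shift) simp
  also have "(\<Sum>a\<le>k. u n ^ Suc a * hh n (Suc k - Suc a) u) = u n * hh (Suc n) k u"
    by (simp add: hh_Suc sum_distrib_left mult.assoc)
  finally show ?thesis .
qed

lemma hcomplete_zero: "hcomplete n 0 u = 1"
  using hcomplete_nat[of n 0 u] hh_zero by simp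

lemma hcomplete_rec:
  "hcomplete (Suc n) k u = hcomplete n k u + u n * hcomplete (Suc n) (k - 1) u"
proof (cases "k < 0")
  case True then show ?thesis by (simp add: hcomplete_neg)
next
  case False
  then obtain m where m: "k = int m" by (metis nonneg_int_cases not_less)
  show ?thesis
  proof (cases m)
    case 0 then show ?thesis using m by (simp add: hcomplete_zero hcomplete_neg)
  next
    case (Suc m')
    then have "k - 1 = int m'" using m by simp
    then show ?thesis using m Suc hh_rec[of n m' u] hcomplete_nat[of "Suc n" "Suc m'" u]
        hcomplete_nat[of n "Suc m'" u] hcomplete_nat[of "Suc n" m' u] by simp
  qed
qed




definition DDs :: "nat set \<Rightarrow> (nat \<Rightarrow> complex) \<Rightarrow> nat \<Rightarrow> complex" where
  "DDs S u p = (\<Sum>k\<in>S. u k ^ p / (\<Prod>l\<in>S - {k}. (u k - u l)))"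

lemma DDs_step:
  assumes "finite S" "inj_on u S" "j \<in> S"
  shows "DDs S u (Suc p) - u j * DDs S u p = DDs (S - {j}) u p"
proof -
  have "DDs S u (Suc p) - u j * DDs S u p = (\<Sum>k\<in>S. (u k - u j) * u k ^ p / (\<Prod>l\<in>S - {k}. (u k - u l)))"
    unfolding DDs_def by (simp add: sum_distrib_left sum_subtractf[symmetric] algebra_simps diff_divide_distrib)
  also have "\<dots> = (\<Sum>k\<in>S - {j}. (u k - u j) * u k ^ p / (\<Prod>l\<in>S - {k}. (u k - u l)))"
    using assms by (subst sum.remove[of _ j]) auto
  also have "\<dots> = DDs (S - {j}) u p"
    unfolding DDs_def
  proof (rule sum.cong[OF refl])
    fix k assume k: "k \<in> S - {j}"
    have ne: "u k - u j \<noteq> 0" using assms k by (auto simp: inj_on_def)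
    have "S - {k} = insert j (S - {j} - {k})" using k assms by auto
    then have "(\<Prod>l\<in>S - {k}. (u k - u l)) = (u k - u j) * (\<Prod>l\<in>S - {j} - {k}. (u k - u l))"
      using assms by (simp add: prod.insert)
    then show "(u k - u j) * u k ^ p / (\<Prod>l\<in>S - {k}. (u k - u l)) = u k ^ p / (\<Prod>l\<in>S - {j} - {k}. (u k - u l))"
      using ne by simp
  qed
  finally show ?thesis .
qed

lemma DDs_zero:
  assumes "finite S" "inj_on u S"
  shows "DDs S u 0 = (if card S = 1 then 1 else 0)"
  using assms
proof (induction "card S" arbitrary: S rule: less_induct)
  case less
  show ?case
  proof (cases "card S \<le> 1")
    case True
    then consider "S = {}" | a where "S = {a}" using less.prems
      by (metis card_0_eq card_1_singletonE le_Suc_eq le_zero_eq One_nat_def)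
    then show ?thesis by cases (auto simp: DDs_def)
  next
    case False
    then obtain j j' where jj: "j \<in> S" "j' \<in> S" "j \<noteq> j'"
      using less.prems(1) card_le_Suc0_iff_eq[of S] by auto
    have cj: "card (S - {j}) = card S - 1" "card (S - {j'}) = card S - 1"
      using jj less.prems by auto
    have lt: "card (S - {j}) < card S" "card (S - {j'}) < card S" using cj False by auto
    have e: "DDs (S - {j}) u 0 = DDs (S - {j'}) u 0"
    proof -
      have i1: "inj_on u (S - {j})" "inj_on u (S - {j'})" using less.prems(2) by (auto intro: inj_on_subset)
      show ?thesis using less.hyps[OF lt(1)] less.hyps[OF lt(2)] less.prems(1) cj i1 by simp
    qed
    have a1: "DDs S u 1 - u j * DDs S u 0 = DDs (S - {j}) u 0"
      using DDs_step[OF less.prems jj(1), of 0] by simp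
    have a2: "DDs S u 1 - u j' * DDs S u 0 = DDs (S - {j'}) u 0"
      using DDs_step[OF less.prems jj(2), of 0] by simp
    have "(u j' - u j) * DDs S u 0 = (DDs S u 1 - u j * DDs S u 0) - (DDs S u 1 - u j' * DDs S u 0)"
      by (simp add: algebra_simps)
    also have "\<dots> = 0" using a1 a2 e by simp
    finally have "(u j' - u j) * DDs S u 0 = 0" .
    moreover have "u j' - u j \<noteq> 0" using jj less.prems by (auto simp: inj_on_def)
    ultimately show ?thesis using False by simp
  qed
qed

lemma DDs_hcomplete:
  assumes "inj_on u {..<Suc n}"
  shows "DDs {..<Suc n} u p = hcomplete (Suc n) (int p - int n) u"
  using assms
proof (induction n arbitrary: p)
  case 0
  have "hcomplete 1 (int p) u = u 0 ^ p"
    by (simp add: hcomplete_nat hh_Suc hh_0 if_distrib cong: if_cong)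
  then show ?case by (simp add: DDs_def)
next
  case (Suc n)
  note prems = Suc.prems
  note IHo = Suc.IH
  show ?case
  proof (induction p)
    case 0
    have "card {..<Suc (Suc n)} \<noteq> 1" by simp
    then show ?case using DDs_zero[OF _ prems] by (simp add: hcomplete_neg)
  next
    case (Suc p)
    have inj': "inj_on u {..<Suc n}" using prems by (rule inj_on_subset) auto
    have st: "DDs {..<Suc (Suc n)} u (Suc p) = u (Suc n) * DDs {..<Suc (Suc n)} u p + DDs {..<Suc n} u p"
      using DDs_step[OF _ prems, of "Suc n" p] by (simp add: lessThan_Suc algebra_simps)
    show ?case
      unfolding st Suc.IH IHo[OF inj']
      using hcomplete_rec[of "Suc n" "int (Suc p) - int (Suc n)" u] by (simp add: algebra_simps)
  qed
qed



definition Pden :: "nat \<Rightarrow> (nat \<Rightarrow> complex) \<Rightarrow> nat \<Rightarrow> complex" where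
  "Pden N u k = (\<Prod>l\<in>{..<N} - {k}. (u k - u l))"

lemma sumW:
  assumes "N \<ge> 1" "inj_on u {..<N}"
  shows "(\<Sum>k<N. u k ^ m / Pden N u k) = hcomplete N (int m - int N + 1) u"
proof -
  obtain n where n: "N = Suc n" using assms by (cases N) auto
  show ?thesis using DDs_hcomplete[of u n m] assms unfolding n DDs_def Pden_def by (simp add: algebra_simps)
qed

lemma cfun_alg:
  fixes u X Q :: complex
  assumes "u \<noteq> 0" "\<xi>0 \<noteq> 0"
  shows "u * X * (1 - \<gamma> * (q * Q) + s0^2 * \<gamma> * (\<gamma> - Q)
      - s0 * \<gamma> * ((1 - Q) * inverse (u * \<xi>0) + (1 - q * Q) * u * \<xi>0)) =
    (- \<gamma> * s0 * inverse \<xi>0 * (1 - Q)) * X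
    + (1 + \<gamma>^2 * s0^2 - \<gamma> * (q + s0^2) * Q) * (u * X)
    - \<gamma> * s0 * \<xi>0 * (1 - q * Q) * (u * (u * X))"
  using assms by (simp add: field_simps power2_eq_square)

lemma cfun_expand:
  assumes "u \<noteq> 0" "\<xi>0 \<noteq> 0"
  shows "u ^ i * cfun q \<gamma> s0 \<xi>0 K u =
    (if K + i = 0 then 0 else (- \<gamma> * s0 * inverse \<xi>0 * (1 - q ^ K)) * u ^ (K + i - 1))
    + (1 + \<gamma>^2 * s0^2 - \<gamma> * (q + s0^2) * q ^ K) * u ^ (K + i)
    - \<gamma> * s0 * \<xi>0 * (1 - q ^ (K + 1)) * u ^ (K + i + 1)"
proof (cases "K + i = 0")
  case True
  then show ?thesis using assms unfolding cfun_def by (simp add: field_simps power2_eq_square)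
next
  case False
  then obtain m where m: "K + i = Suc m" by (cases "K + i") auto
  have "u ^ i * cfun q \<gamma> s0 \<xi>0 K u = u ^ (K + i) * (1 - \<gamma> * (q * q ^ K) + s0^2 * \<gamma> * (\<gamma> - q ^ K)
      - s0 * \<gamma> * ((1 - q ^ K) * inverse (u * \<xi>0) + (1 - q * q ^ K) * u * \<xi>0))"
    unfolding cfun_def by (simp add: power_add)
  also have "\<dots> = u * u ^ m * (1 - \<gamma> * (q * q ^ K) + s0^2 * \<gamma> * (\<gamma> - q ^ K)
      - s0 * \<gamma> * ((1 - q ^ K) * inverse (u * \<xi>0) + (1 - q * q ^ K) * u * \<xi>0))"
    by (simp add: m)
  also have "\<dots> = (- \<gamma> * s0 * inverse \<xi>0 * (1 - q ^ K)) * u ^ m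
    + (1 + \<gamma>^2 * s0^2 - \<gamma> * (q + s0^2) * q ^ K) * (u * u ^ m)
    - \<gamma> * s0 * \<xi>0 * (1 - q * q ^ K) * (u * (u * u ^ m))"
    by (rule cfun_alg[OF assms])
  finally show ?thesis using False by (simp add: m)
qed

lemma distinct_inj:
  fixes u :: "nat \<Rightarrow> 'b" and N :: nat
  assumes "\<forall>i j. i < j \<longrightarrow> j < N \<longrightarrow> u i \<noteq> u j"
  shows "inj_on u {..<N}"
proof (rule inj_onI)
  fix a b :: nat assume "a \<in> {..<N}" "b \<in> {..<N}" "u a = u b"
  then show "a = b" using assms by (cases a b rule: linorder_cases) (auto, metis)
qed

lemma vandermonde_nonzero:
  assumes "\<forall>i j. i < j \<longrightarrow> j < N \<longrightarrow> u i \<noteq> u j"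
  shows "vandermonde N u \<noteq> 0"
  using assms unfolding vandermonde_def by (auto simp: prod_zero_iff)

lemma part2:
  fixes N :: nat and q \<gamma> s0 \<xi>0 :: complex and u :: "nat \<Rightarrow> complex"
  assumes "N \<ge> 1"
    and "\<xi>0 \<noteq> 0"
    and "\<forall>i<N. u i \<noteq> 0"
    and "\<forall>i j. i < j \<longrightarrow> j < N \<longrightarrow> u i \<noteq> u j"
  shows "Cfun q \<gamma> s0 \<xi>0 N lam u =
           det (mat N N (\<lambda>(i,j).
             - \<gamma> * s0 * inverse \<xi>0 * (1 - q ^ (lam j + (N - 1 - j)))
                 * hcomplete N (int (lam j) + int i - int j - 1) u
             + (1 + \<gamma>^2 * s0^2 - \<gamma> * (q + s0^2) * q ^ (lam j + (N - 1 - j)))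
                 * hcomplete N (int (lam j) + int i - int j) u
             - \<gamma> * s0 * \<xi>0 * (1 - q ^ (lam j + (N - 1 - j) + 1))
                 * hcomplete N (int (lam j) + int i - int j + 1) u))"
proof -
  have inj: "inj_on u {..<N}" using assms(4) by (rule distinct_inj)
  have V: "vandermonde N u \<noteq> 0" using assms(4) by (rule vandermonde_nonzero)
  define K where "K j = lam j + (N - 1 - j)" for j
  define W where "W i k = u k ^ i / Pden N u k" for i k
  define C where "C k j = cfun q \<gamma> s0 \<xi>0 (K j) (u k)" for k j
  have SW: "(\<Sum>k<N. u k ^ m / Pden N u k) = hcomplete N (int m - int N + 1) u" for m
    by (rule sumW[OF assms(1) inj])
  have entry: "(\<Sum>k<N. W i k * C k j) =
             - \<gamma> * s0 * inverse \<xi>0 * (1 - q ^ (lam j + (N - 1 - j)))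
                 * hcomplete N (int (lam j) + int i - int j - 1) u
             + (1 + \<gamma>^2 * s0^2 - \<gamma> * (q + s0^2) * q ^ (lam j + (N - 1 - j)))
                 * hcomplete N (int (lam j) + int i - int j) u
             - \<gamma> * s0 * \<xi>0 * (1 - q ^ (lam j + (N - 1 - j) + 1))
                 * hcomplete N (int (lam j) + int i - int j + 1) u"
    if ij: "i < N" "j < N" for i j
  proof -
    define al where "al = - \<gamma> * s0 * inverse \<xi>0 * (1 - q ^ K j)"
    define be where "be = 1 + \<gamma>^2 * s0^2 - \<gamma> * (q + s0^2) * q ^ K j"
    define de where "de = \<gamma> * s0 * \<xi>0 * (1 - q ^ (K j + 1))"
    have "(\<Sum>k<N. W i k * C k j) = (\<Sum>k<N. (u k ^ i * cfun q \<gamma> s0 \<xi>0 (K j) (u k)) / Pden N u k)"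
      by (simp add: W_def C_def)
    also have "\<dots> = (\<Sum>k<N. ((if K j + i = 0 then 0 else al * u k ^ (K j + i - 1))
        + be * u k ^ (K j + i) - de * u k ^ (K j + i + 1)) / Pden N u k)"
      by (rule sum.cong[OF refl]) (use assms(2,3) in \<open>simp add: cfun_expand al_def be_def de_def\<close>)
    also have "\<dots> = (if K j + i = 0 then 0 else al * (\<Sum>k<N. u k ^ (K j + i - 1) / Pden N u k))
        + be * (\<Sum>k<N. u k ^ (K j + i) / Pden N u k) - de * (\<Sum>k<N. u k ^ (K j + i + 1) / Pden N u k)"
      by (simp add: add_divide_distrib diff_divide_distrib sum.distrib sum_subtractf sum_distrib_left)
    also have "\<dots> = (if K j + i = 0 then 0 else al * hcomplete N (int (K j + i - 1) - int N + 1) u)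
        + be * hcomplete N (int (K j + i) - int N + 1) u - de * hcomplete N (int (K j + i + 1) - int N + 1) u"
      by (simp only: SW)
    also have "\<dots> = al * hcomplete N (int (lam j) + int i - int j - 1) u
        + be * hcomplete N (int (lam j) + int i - int j) u - de * hcomplete N (int (lam j) + int i - int j + 1) u"
    proof -
      have e1: "int (K j + i) - int N + 1 = int (lam j) + int i - int j" using ij by (simp add: K_def)
      have e2: "int (K j + i + 1) - int N + 1 = int (lam j) + int i - int j + 1" using ij by (simp add: K_def)
      have e3: "(if K j + i = 0 then 0 else al * hcomplete N (int (K j + i - 1) - int N + 1) u)
          = al * hcomplete N (int (lam j) + int i - int j - 1) u"
      proof (cases "K j + i = 0")
        case True
        then have "K j = 0" by simp
        then show ?thesis using True by (simp add: al_def)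
      next
        case False
        have e: "int (K j + i - 1) - int N + 1 = int (lam j) + int i - int j - 1" using ij False by (simp add: K_def)
        show ?thesis by (subst if_not_P[OF False]) (simp only: e)
      qed
      show ?thesis by (simp only: e1 e2 e3)
    qed
    finally show ?thesis by (simp add: al_def be_def de_def K_def)
  qed
  have detE: "det (mat N N (\<lambda>(i,j). \<Sum>k<N. W i k * C k j)) =
      det (mat N N (\<lambda>(i,j). W i j)) * det (mat N N (\<lambda>(i,j). C i j))"
    by (rule det_mat_mult_fun)
  have "det (mat N N (\<lambda>(i,j). \<Sum>k<N. W i k * u k ^ (N - 1 - j))) = 1"
  proof (rule det_mat_lower_unit)
    have s: "(\<Sum>k<N. W i k * u k ^ (N - 1 - j)) = hcomplete N (int i - int j) u" if "j < N" for i j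
    proof -
      have "(\<Sum>k<N. W i k * u k ^ (N - 1 - j)) = (\<Sum>k<N. u k ^ (i + (N - 1 - j)) / Pden N u k)"
        by (simp add: W_def power_add)
      also have "\<dots> = hcomplete N (int i - int j) u" using that SW by simp
      finally show ?thesis .
    qed
    show "(\<Sum>k<N. W i k * u k ^ (N - 1 - j)) = 0" if "i < j" "j < N" for i j
      using that s by (simp add: hcomplete_neg)
    show "(\<Sum>k<N. W i k * u k ^ (N - 1 - i)) = 1" if "i < N" for i
      using that s[of i i] by (simp add: hcomplete_zero)
  qed
  moreover have "det (mat N N (\<lambda>(i,j). \<Sum>k<N. W i k * u k ^ (N - 1 - j))) =
      det (mat N N (\<lambda>(i,j). W i j)) * det (mat N N (\<lambda>(i,j). u i ^ (N - 1 - j)))"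
    by (rule det_mat_mult_fun)
  moreover have "det (mat N N (\<lambda>(i,j). u i ^ (N - 1 - j))) = vandermonde N u"
    using det_mat_transpose_fun[of N "\<lambda>i j. u j ^ (N - 1 - i)"] det_vandermonde[of N u] by simp
  ultimately have detW: "det (mat N N (\<lambda>(i,j). W i j)) = 1 / vandermonde N u"
    using V by (simp add: field_simps)
  have detC: "det (mat N N (\<lambda>(i,j). C i j)) = det (mat N N (\<lambda>(i,j). cfun q \<gamma> s0 \<xi>0 (lam i + (N - 1 - i)) (u j)))"
    using det_mat_transpose_fun[of N "\<lambda>i j. cfun q \<gamma> s0 \<xi>0 (lam i + (N - 1 - i)) (u j)"]
    by (simp add: C_def K_def)
  have "mat N N (\<lambda>(i,j). \<Sum>k<N. W i k * C k j) = mat N N (\<lambda>(i,j).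
             - \<gamma> * s0 * inverse \<xi>0 * (1 - q ^ (lam j + (N - 1 - j)))
                 * hcomplete N (int (lam j) + int i - int j - 1) u
             + (1 + \<gamma>^2 * s0^2 - \<gamma> * (q + s0^2) * q ^ (lam j + (N - 1 - j)))
                 * hcomplete N (int (lam j) + int i - int j) u
             - \<gamma> * s0 * \<xi>0 * (1 - q ^ (lam j + (N - 1 - j) + 1))
                 * hcomplete N (int (lam j) + int i - int j + 1) u)"
    by (rule eq_matI) (simp_all add: entry)
  then show ?thesis using detE detW detC unfolding Cfun_def by simp
qed



lemma part3:
  "Cfun q \<gamma> 0 \<xi>0 N lam u = (\<Prod>j<N. (1 - \<gamma> * q * q ^ (lam j + (N - 1 - j)))) * schur N lam u"
proof -
  have "det (mat N N (\<lambda>(i,j). cfun q \<gamma> 0 \<xi>0 (lam i + (N - 1 - i)) (u j))) =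
        det (mat N N (\<lambda>(i,j). (1 - \<gamma> * q * q ^ (lam i + (N - 1 - i))) * u j ^ (lam i + (N - 1 - i))))"
    by (rule arg_cong[where f = det], rule eq_matI) (auto simp: cfun_def algebra_simps)
  also have "\<dots> = (\<Prod>j<N. (1 - \<gamma> * q * q ^ (lam j + (N - 1 - j)))) *
       det (mat N N (\<lambda>(i,j). u j ^ (lam i + (N - 1 - i))))"
    by (rule det_mat_rowscale)
  also have "det (mat N N (\<lambda>(i,j). u j ^ (lam i + (N - 1 - i)))) = det (mat N N (\<lambda>(i,j). u i ^ (lam j + (N - 1 - j))))"
    by (rule det_mat_transpose_fun)
  finally show ?thesis unfolding Cfun_def schur_def by simp
qed



lemma geom_has_sum:
  fixes x :: complex
  assumes "norm x < 1"
  shows "((\<lambda>k. x ^ k) has_sum (1 / (1 - x))) UNIV"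
proof (rule norm_summable_imp_has_sum)
  show "summable (\<lambda>n. norm (x ^ n))" using assms by (simp add: norm_power summable_geometric)
  show "(\<lambda>n. x ^ n) sums (1 / (1 - x))" using geometric_sums[OF assms] by simp
qed

definition PP where "PP \<gamma> s0 \<xi>0 u = 1 + s0^2 * \<gamma>^2 - s0 * \<gamma> * inverse (u * \<xi>0) - s0 * \<gamma> * u * \<xi>0"
definition QQ where "QQ q \<gamma> s0 \<xi>0 u = - \<gamma> * q - s0^2 * \<gamma> + s0 * \<gamma> * inverse (u * \<xi>0) + s0 * \<gamma> * q * u * \<xi>0"

lemma cfun_geom:
  "cfun q \<gamma> s0 \<xi>0 k u * v ^ k = PP \<gamma> s0 \<xi>0 u * (u * v) ^ k + QQ q \<gamma> s0 \<xi>0 u * (q * u * v) ^ k"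
proof -
  have "cfun q \<gamma> s0 \<xi>0 k u * v ^ k = (u * v) ^ k * (1 - \<gamma> * (q * q ^ k) + s0^2 * \<gamma> * (\<gamma> - q ^ k)
     - s0 * \<gamma> * ((1 - q ^ k) * inverse (u * \<xi>0) + (1 - q * q ^ k) * u * \<xi>0))"
    unfolding cfun_def by (simp add: power_mult_distrib)
  also have "\<dots> = PP \<gamma> s0 \<xi>0 u * (u * v) ^ k + QQ q \<gamma> s0 \<xi>0 u * (q ^ k * (u * v) ^ k)"
    unfolding PP_def QQ_def by (simp add: algebra_simps power2_eq_square)
  finally show ?thesis by (simp add: power_mult_distrib mult.assoc)
qed

lemma zfun_PQ:
  assumes "u \<noteq> 0" "\<xi>0 \<noteq> 0" "1 - u * v \<noteq> 0" "1 - q * u * v \<noteq> 0"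
  shows "zfun q \<gamma> s0 \<xi>0 u v = PP \<gamma> s0 \<xi>0 u / (1 - u * v) + QQ q \<gamma> s0 \<xi>0 u / (1 - q * u * v)"
proof -
  have e1: "PP \<gamma> s0 \<xi>0 u / (1 - u * v) + QQ q \<gamma> s0 \<xi>0 u / (1 - q * u * v) =
      (PP \<gamma> s0 \<xi>0 u * (1 - q * u * v) + QQ q \<gamma> s0 \<xi>0 u * (1 - u * v)) / ((1 - u * v) * (1 - q * u * v))"
    using assms(3,4) by (simp add: add_frac_eq)
  have e2: "PP \<gamma> s0 \<xi>0 u * (1 - q * u * v) + QQ q \<gamma> s0 \<xi>0 u * (1 - u * v) =
      (1 - \<gamma>) * (q - \<gamma> * s0^2) * (1 - u * v)
       + (1 - q) * (1 - \<gamma> * \<xi>0 * s0 * u) * (1 - \<gamma> * inverse \<xi>0 * s0 * v)"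
    using assms(1,2) unfolding PP_def QQ_def by (simp add: field_simps power2_eq_square)
  show ?thesis unfolding e1 e2 zfun_def ..
qed

lemma z_has_sum:
  assumes "u \<noteq> 0" "\<xi>0 \<noteq> 0" "norm (u * v) < 1" "norm (q * u * v) < 1"
  shows "((\<lambda>k. cfun q \<gamma> s0 \<xi>0 k u * v ^ k) has_sum zfun q \<gamma> s0 \<xi>0 u v) UNIV"
proof -
  have n1: "1 - u * v \<noteq> 0" using assms(3) by auto
  have n2: "1 - q * u * v \<noteq> 0" using assms(4) by auto
  have "((\<lambda>k. PP \<gamma> s0 \<xi>0 u * (u * v) ^ k + QQ q \<gamma> s0 \<xi>0 u * (q * u * v) ^ k) has_sum
     (PP \<gamma> s0 \<xi>0 u * (1 / (1 - u * v)) + QQ q \<gamma> s0 \<xi>0 u * (1 / (1 - q * u * v)))) UNIV"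
    by (intro has_sum_add has_sum_cmult_right geom_has_sum assms)
  then show ?thesis using zfun_PQ[OF assms(1,2) n1 n2] by (simp add: cfun_geom)
qed



lemma has_sum_finsum:
  fixes f :: "'i \<Rightarrow> 'a \<Rightarrow> complex"
  assumes "finite I" "\<And>i. i \<in> I \<Longrightarrow> (f i has_sum s i) A"
  shows "((\<lambda>x. \<Sum>i\<in>I. f i x) has_sum (\<Sum>i\<in>I. s i)) A"
  using assms
proof (induction I rule: finite_induct)
  case empty then show ?case by simp
next
  case (insert i I)
  then show ?case by (simp add: has_sum_add)
qed

lemma prod_abs_summable:
  fixes f :: "nat \<Rightarrow> nat \<Rightarrow> complex"
  assumes "finite A" "\<And>i. i \<in> A \<Longrightarrow> (\<lambda>k. norm (f i k)) summable_on UNIV"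
  shows "(\<lambda>g. norm (\<Prod>i\<in>A. f i (g i))) summable_on (PiE A (\<lambda>_. UNIV))"
proof (rule nonneg_bdd_above_summable_on)
  show "bdd_above (sum (\<lambda>g. norm (\<Prod>i\<in>A. f i (g i))) ` {F. F \<subseteq> PiE A (\<lambda>_. UNIV) \<and> finite F})"
  proof (rule bdd_aboveI2)
    fix F :: "(nat \<Rightarrow> nat) set" assume F: "F \<in> {F. F \<subseteq> PiE A (\<lambda>_. UNIV) \<and> finite F}"
    define B' where "B' i = (\<lambda>p. p i) ` F" for i
    have finB: "finite (B' i)" for i using F by (auto simp: B'_def)
    have FB: "F \<subseteq> PiE A B'" using F by (auto simp: B'_def PiE_def Pi_def)
    have "(\<Sum>g\<in>F. norm (\<Prod>i\<in>A. f i (g i))) \<le> (\<Sum>g\<in>PiE A B'. norm (\<Prod>i\<in>A. f i (g i)))"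
      by (rule sum_mono2) (use FB finB assms(1) in \<open>auto simp: finite_PiE\<close>)
    also have "\<dots> = (\<Sum>g\<in>PiE A B'. \<Prod>i\<in>A. norm (f i (g i)))" by (simp add: prod_norm)
    also have "\<dots> = (\<Prod>i\<in>A. \<Sum>y\<in>B' i. norm (f i y))"
      by (rule prod_sum_PiE[symmetric]) (use assms(1) finB in auto)
    also have "\<dots> \<le> (\<Prod>i\<in>A. infsum (\<lambda>k. norm (f i k)) UNIV)"
      by (rule prod_mono) (auto intro!: sum_nonneg finite_sum_le_infsum assms(2) finB)
    finally show "(\<Sum>g\<in>F. norm (\<Prod>i\<in>A. f i (g i))) \<le> (\<Prod>i\<in>A. infsum (\<lambda>k. norm (f i k)) UNIV)" .
  qed
qed simp

lemma prod_has_sum: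
  fixes f :: "nat \<Rightarrow> nat \<Rightarrow> complex"
  assumes "finite A" "\<And>i. i \<in> A \<Longrightarrow> (f i has_sum s i) UNIV"
  shows "((\<lambda>g. \<Prod>i\<in>A. f i (g i)) has_sum (\<Prod>i\<in>A. s i)) (PiE A (\<lambda>_. UNIV))"
proof -
  have abs1: "(\<lambda>k. norm (f i k)) summable_on UNIV" if "i \<in> A" for i
    using assms(2)[OF that] summable_on_iff_abs_summable_on_complex has_sum_imp_summable by blast
  have "(\<lambda>g. norm (\<Prod>i\<in>A. f i (g i))) summable_on PiE A (\<lambda>_. UNIV)"
    by (rule prod_abs_summable) (use assms(1) abs1 in auto)
  then have sm: "(\<lambda>g. \<Prod>i\<in>A. f i (g i)) summable_on PiE A (\<lambda>_. UNIV)"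
    using summable_on_iff_abs_summable_on_complex by blast
  have "infsum (\<lambda>g. \<Prod>i\<in>A. f i (g i)) (PiE A (\<lambda>_. UNIV)) = (\<Prod>i\<in>A. infsum (f i) UNIV)"
    by (rule infsum_prod_PiE_abs) (use assms(1) abs1 in auto)
  also have "\<dots> = (\<Prod>i\<in>A. s i)"
    using assms(2) by (intro prod.cong refl) (simp add: has_sum_iff)
  finally show ?thesis using sm by (simp add: has_sum_iff)
qed

lemma det_series:
  fixes a b :: "nat \<Rightarrow> nat \<Rightarrow> complex" and z :: "nat \<Rightarrow> nat \<Rightarrow> complex"
  assumes "\<And>i j. i < N \<Longrightarrow> j < N \<Longrightarrow> ((\<lambda>k. a i k * b j k) has_sum z i j) UNIV"
  shows "((\<lambda>\<kappa>. (\<Prod>i<N. a i (\<kappa> i)) * det (mat N N (\<lambda>(i,j). b j (\<kappa> i))))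
           has_sum det (mat N N (\<lambda>(i,j). z i j))) (PiE {..<N} (\<lambda>_. UNIV))"
proof -
  have "((\<lambda>\<kappa>. \<Sum>p | p permutes {..<N}. signof p * (\<Prod>i<N. a i (\<kappa> i) * b (p i) (\<kappa> i)))
     has_sum (\<Sum>p | p permutes {..<N}. signof p * (\<Prod>i<N. z i (p i)))) (PiE {..<N} (\<lambda>_. UNIV))"
  proof (rule has_sum_finsum)
    show "finite {p. p permutes {..<N}}" by (simp add: finite_permutations)
    fix p assume p: "p \<in> {p. p permutes {..<N}}"
    have "((\<lambda>\<kappa>. \<Prod>i<N. a i (\<kappa> i) * b (p i) (\<kappa> i)) has_sum (\<Prod>i<N. z i (p i))) (PiE {..<N} (\<lambda>_. UNIV))"
    proof (rule prod_has_sum[where f = "\<lambda>i k. a i k * b (p i) k"])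
      fix i assume i: "i \<in> {..<N}"
      have "p i < N" using p i permutes_in_image[of p "{..<N}" i] by simp
      then show "((\<lambda>k. a i k * b (p i) k) has_sum z i (p i)) UNIV" using i assms by simp
    qed simp
    then show "((\<lambda>\<kappa>. signof p * (\<Prod>i<N. a i (\<kappa> i) * b (p i) (\<kappa> i))) has_sum
          signof p * (\<Prod>i<N. z i (p i))) (PiE {..<N} (\<lambda>_. UNIV))"
      by (rule has_sum_cmult_right)
  qed
  moreover have "(\<Sum>p | p permutes {..<N}. signof p * (\<Prod>i<N. a i (\<kappa> i) * b (p i) (\<kappa> i))) =
      (\<Prod>i<N. a i (\<kappa> i)) * det (mat N N (\<lambda>(i,j). b j (\<kappa> i)))" for \<kappa>
    unfolding det_mat_leibniz by (simp add: prod.distrib sum_distrib_left mult.left_commute)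
  ultimately show ?thesis by (simp add: det_mat_leibniz)
qed



definition sdec :: "nat \<Rightarrow> (nat \<Rightarrow> nat) \<Rightarrow> bool" where
  "sdec N K \<longleftrightarrow> (\<forall>i j. i < j \<longrightarrow> j < N \<longrightarrow> K j < K i)"

lemma sdec_inj: "sdec N f \<Longrightarrow> inj_on f {..<N}"
  unfolding sdec_def inj_on_def by (metis lessThan_iff linorder_neqE_nat less_irrefl)

lemma sdec_sorted:
  assumes "sdec N f"
  shows "sorted_list_of_set (f ` {..<N}) = rev (map f [0..<N])"
proof -
  have "sorted_wrt (<) (rev (map f [0..<N]))"
    using assms unfolding sorted_wrt_rev sdec_def by (auto simp: sorted_wrt_iff_nth_less)
  moreover have "set (rev (map f [0..<N])) = f ` {..<N}" by (auto simp: atLeast0LessThan)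
  moreover have "length (rev (map f [0..<N])) = card (f ` {..<N})"
    using card_image[OF sdec_inj[OF assms]] by simp
  ultimately show ?thesis
    using sorted_list_of_set_unique[of "f ` {..<N}" "rev (map f [0..<N])"] by simp
qed

lemma sdec_nth:
  assumes "sdec N f" "i < N"
  shows "f i = rev (sorted_list_of_set (f ` {..<N})) ! i"
  using assms by (simp add: sdec_sorted)

lemma sdec_eq:
  assumes "sdec N f" "sdec N g" "f ` {..<N} = g ` {..<N}" "i < N"
  shows "f i = g i"
  using sdec_nth[OF assms(1,4)] sdec_nth[OF assms(2,4)] assms(3) by simp

lemma sdec_gap:
  assumes "sdec N K" "i \<le> j" "j < N"
  shows "K j + (j - i) \<le> K i"
  using assms(2,3)
proof (induction j)
  case 0 then show ?case by simp
next
  case (Suc j)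
  show ?case
  proof (cases "i = Suc j")
    case True then show ?thesis by simp
  next
    case False
    then have "i \<le> j" using Suc.prems by simp
    then have "K j + (j - i) \<le> K i" using Suc by simp
    moreover have "K (Suc j) < K j" using assms(1) Suc.prems unfolding sdec_def by simp
    ultimately show ?thesis using \<open>i \<le> j\<close> by simp
  qed
qed

definition Kv :: "nat \<Rightarrow> (nat \<Rightarrow> nat) \<Rightarrow> nat \<Rightarrow> nat" where
  "Kv N lam i = lam i + (N - 1 - i)"

lemma Kv_sdec: "lam \<in> Sign N \<Longrightarrow> sdec N (Kv N lam)"
  unfolding Sign_def sdec_def Kv_def
proof (clarify)
  fix i j assume h: "\<forall>i j. i \<le> j \<longrightarrow> j < N \<longrightarrow> lam j \<le> lam i" "i < j" "j < N"
  have "lam j \<le> lam i" using h by auto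
  then show "lam j + (N - 1 - j) < lam i + (N - 1 - i)" using h(2,3) by arith
qed

definition Phi :: "nat \<Rightarrow> (nat \<Rightarrow> nat) \<times> (nat \<Rightarrow> nat) \<Rightarrow> nat \<Rightarrow> nat" where
  "Phi N x = restrict (\<lambda>i. Kv N (fst x) (snd x i)) {..<N}"

lemma Phi_inj: "inj_on (Phi N) (Sign N \<times> {\<tau>. \<tau> permutes {..<N}})"
proof (rule inj_onI)
  fix x y assume x: "x \<in> Sign N \<times> {\<tau>. \<tau> permutes {..<N}}" and y: "y \<in> Sign N \<times> {\<tau>. \<tau> permutes {..<N}}"
    and exy: "Phi N x = Phi N y"
  obtain l \<tau> where xx: "x = (l, \<tau>)" by (cases x)
  obtain l' \<tau>' where yy: "y = (l', \<tau>')" by (cases y)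
  have l: "l \<in> Sign N" and t: "\<tau> permutes {..<N}" using x xx by auto
  have l': "l' \<in> Sign N" and t': "\<tau>' permutes {..<N}" using y yy by auto
  have e: "Phi N (l, \<tau>) = Phi N (l', \<tau>')" using exy xx yy by simp
  have e1: "Kv N l (\<tau> i) = Kv N l' (\<tau>' i)" if "i < N" for i
    using fun_cong[OF e, of i] that by (simp add: Phi_def)
  have "Kv N l ` {..<N} = Kv N l ` (\<tau> ` {..<N})" using permutes_image[OF t] by simp
  also have "\<dots> = Kv N l' ` (\<tau>' ` {..<N})" using e1 by (force simp: image_iff)
  also have "\<dots> = Kv N l' ` {..<N}" using permutes_image[OF t'] by simp
  finally have im: "Kv N l ` {..<N} = Kv N l' ` {..<N}" .
  have kk: "Kv N l i = Kv N l' i" if "i < N" for i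
    by (rule sdec_eq[OF Kv_sdec[OF l] Kv_sdec[OF l'] im that])
  have ll: "l = l'"
  proof
    fix i show "l i = l' i"
    proof (cases "i < N")
      case True then show ?thesis using kk[OF True] by (simp add: Kv_def)
    next
      case False then show ?thesis using l l' by (simp add: Sign_def)
    qed
  qed
  have "\<tau> = \<tau>'"
  proof
    fix i show "\<tau> i = \<tau>' i"
    proof (cases "i < N")
      case True
      have "\<tau> i < N" "\<tau>' i < N" using True permutes_in_image[OF t] permutes_in_image[OF t'] by auto
      moreover have "Kv N l (\<tau> i) = Kv N l (\<tau>' i)" using e1[OF True] ll by simp
      ultimately show ?thesis using sdec_inj[OF Kv_sdec[OF l]] by (auto simp: inj_on_def)
    next
      case False then show ?thesis using permutes_not_in[OF t] permutes_not_in[OF t'] by auto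
    qed
  qed
  then show "x = y" using ll xx yy by simp
qed

lemma Phi_image:
  "Phi N ` (Sign N \<times> {\<tau>. \<tau> permutes {..<N}}) = {\<kappa> \<in> PiE {..<N} (\<lambda>_. UNIV). inj_on \<kappa> {..<N}}"
proof
  show "Phi N ` (Sign N \<times> {\<tau>. \<tau> permutes {..<N}}) \<subseteq> {\<kappa> \<in> PiE {..<N} (\<lambda>_. UNIV). inj_on \<kappa> {..<N}}"
  proof (rule subsetI)
    fix x assume "x \<in> Phi N ` (Sign N \<times> {\<tau>. \<tau> permutes {..<N}})"
    then obtain l \<tau> where l: "l \<in> Sign N" and t: "\<tau> permutes {..<N}" and x: "x = Phi N (l, \<tau>)" by auto
    have "inj_on (\<lambda>i. Kv N l (\<tau> i)) {..<N}"
    proof (rule comp_inj_on[of \<tau> _ "Kv N l", unfolded o_def])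
      show "inj_on \<tau> {..<N}" using t by (meson permutes_inj_on)
      show "inj_on (Kv N l) (\<tau> ` {..<N})" using permutes_image[OF t] sdec_inj[OF Kv_sdec[OF l]] by simp
    qed
    then show "x \<in> {\<kappa> \<in> PiE {..<N} (\<lambda>_. UNIV). inj_on \<kappa> {..<N}}"
      by (auto simp: x Phi_def inj_on_def)
  qed
next
  show "{\<kappa> \<in> PiE {..<N} (\<lambda>_. UNIV). inj_on \<kappa> {..<N}} \<subseteq> Phi N ` (Sign N \<times> {\<tau>. \<tau> permutes {..<N}})"
  proof clarify
    fix \<kappa> :: "nat \<Rightarrow> nat" assume k: "\<kappa> \<in> PiE {..<N} (\<lambda>_. UNIV)" and ki: "inj_on \<kappa> {..<N}"
    define S where "S = \<kappa> ` {..<N}"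
    define sl where "sl = sorted_list_of_set S"
    define xs where "xs = rev sl"
    have finS: "finite S" by (simp add: S_def)
    have cS: "card S = N" using card_image[OF ki] by (simp add: S_def)
    have lsl: "length sl = N" using cS finS by (simp add: sl_def)
    have lxs: "length xs = N" using lsl by (simp add: xs_def)
    have sxs: "set xs = S" using finS by (simp add: xs_def sl_def)
    have ssl: "sorted_wrt (<) sl" unfolding sl_def by (rule strict_sorted_list_of_set)
    have dxs: "distinct xs" using ssl by (simp add: xs_def strict_sorted_iff)
    define K' where "K' i = xs ! i" for i
    have sd: "sdec N K'"
      unfolding sdec_def K'_def xs_def
    proof (clarify)
      fix i j assume ij: "i < j" "j < N"
      have "sl ! (N - 1 - j) < sl ! (N - 1 - i)"
        using ssl ij lsl by (auto simp: sorted_wrt_iff_nth_less)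
      then show "rev sl ! j < rev sl ! i" using ij lsl by (simp add: rev_nth)
    qed
    have big: "N - 1 - i \<le> K' i" if "i < N" for i
      using sdec_gap[OF sd, of i "N - 1"] that by arith
    define lam where "lam i = (if i < N then K' i - (N - 1 - i) else 0)" for i
    have Kl: "Kv N lam i = K' i" if "i < N" for i using big[OF that] that by (simp add: Kv_def lam_def)
    have lS: "lam \<in> Sign N"
      unfolding Sign_def
    proof (safe)
      fix i j assume ij: "i \<le> j" "j < N"
      have "K' j + (j - i) \<le> K' i" by (rule sdec_gap[OF sd ij])
      then show "lam j \<le> lam i" using ij big[of i] big[of j] by (simp add: lam_def)
    next
      fix i :: nat assume "N \<le> i" then show "lam i = 0" by (simp add: lam_def)
    qed
    have bij: "bij_betw ((!) xs) {..<N} S" by (rule bij_betw_nth) (use dxs lxs sxs in auto)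
    define \<tau> where "\<tau> i = (if i < N then inv_into {..<N} ((!) xs) (\<kappa> i) else i)" for i
    have kS: "\<kappa> i \<in> S" if "i < N" for i using that by (simp add: S_def)
    have tA: "\<tau> i < N" if "i < N" for i
      using that kS[OF that] bij inv_into_into[of "\<kappa> i" "(!) xs" "{..<N}"]
      by (simp add: \<tau>_def bij_betw_def)
    have xt: "xs ! (\<tau> i) = \<kappa> i" if "i < N" for i
      using that kS[OF that] bij f_inv_into_f[of "\<kappa> i" "(!) xs" "{..<N}"]
      by (simp add: \<tau>_def bij_betw_def)
    have tinj: "inj_on \<tau> {..<N}"
    proof (rule inj_onI)
      fix i j assume "i \<in> {..<N}" "j \<in> {..<N}" "\<tau> i = \<tau> j"
      then have "\<kappa> i = \<kappa> j" using xt by (metis lessThan_iff)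
      then show "i = j" using ki \<open>i \<in> {..<N}\<close> \<open>j \<in> {..<N}\<close> by (auto simp: inj_on_def)
    qed
    have "\<tau> ` {..<N} = {..<N}" by (rule endo_inj_surj) (use tA tinj in auto)
    then have tp: "\<tau> permutes {..<N}"
      by (intro bij_imp_permutes) (auto simp: bij_betw_def tinj \<tau>_def)
    have "Phi N (lam, \<tau>) = \<kappa>"
    proof
      fix i show "Phi N (lam, \<tau>) i = \<kappa> i"
      proof (cases "i < N")
        case True
        then show ?thesis using Kl[OF tA[OF True]] xt[OF True] by (simp add: Phi_def K'_def)
      next
        case False
        then show ?thesis using PiE_arb[OF k] by (simp add: Phi_def)
      qed
    qed
    then show "\<kappa> \<in> Phi N ` (Sign N \<times> {\<tau>. \<tau> permutes {..<N}})" using lS tp by force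
  qed
qed



lemma det_rows_nonin:
  fixes b :: "nat \<Rightarrow> nat \<Rightarrow> complex"
  assumes "\<not> inj_on \<kappa> {..<N}"
  shows "det (mat N N (\<lambda>(i,j). b j (\<kappa> i))) = 0"
proof -
  obtain i i' where ii: "i < N" "i' < N" "i \<noteq> i'" "\<kappa> i = \<kappa> i'"
    using assms unfolding inj_on_def by auto
  show ?thesis
    by (rule det_identical_rows[OF _ ii(3) ii(1) ii(2)]) (use ii in auto)
qed

lemma fiber_sum:
  fixes a b :: "nat \<Rightarrow> nat \<Rightarrow> complex"
  shows "(\<Sum>\<tau> | \<tau> permutes {..<N}. (\<Prod>i<N. a i (Phi N (lam, \<tau>) i)) * det (mat N N (\<lambda>(i,j). b j (Phi N (lam, \<tau>) i))))
     = det (mat N N (\<lambda>(i,j). a i (Kv N lam j))) * det (mat N N (\<lambda>(i,j). b j (Kv N lam i)))"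
proof -
  let ?K = "Kv N lam"
  let ?B = "mat N N (\<lambda>(i,j). b j (?K i))"
  have t: "(\<Prod>i<N. a i (Phi N (lam, \<tau>) i)) * det (mat N N (\<lambda>(i,j). b j (Phi N (lam, \<tau>) i)))
      = det ?B * (signof \<tau> * (\<Prod>i<N. a i (?K (\<tau> i))))" if tp: "\<tau> permutes {..<N}" for \<tau>
  proof -
    have tl: "\<tau> i < N" if "i < N" for i using permutes_in_image[OF tp] that by simp
    have p1: "(\<Prod>i<N. a i (Phi N (lam, \<tau>) i)) = (\<Prod>i<N. a i (?K (\<tau> i)))"
      by (rule prod.cong) (auto simp: Phi_def)
    have m1: "mat N N (\<lambda>(i,j). b j (Phi N (lam, \<tau>) i)) = mat N N (\<lambda>(i,j). ?B $$ (\<tau> i, j))"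
      by (rule eq_matI) (auto simp: Phi_def tl)
    have "det (mat N N (\<lambda>(i,j). ?B $$ (\<tau> i, j))) = signof \<tau> * det ?B"
      by (rule det_permute_rows) (use tp in \<open>auto simp: atLeast0LessThan\<close>)
    then show ?thesis by (simp add: p1 m1)
  qed
  have "(\<Sum>\<tau> | \<tau> permutes {..<N}. (\<Prod>i<N. a i (Phi N (lam, \<tau>) i)) * det (mat N N (\<lambda>(i,j). b j (Phi N (lam, \<tau>) i))))
      = (\<Sum>\<tau> | \<tau> permutes {..<N}. det ?B * (signof \<tau> * (\<Prod>i<N. a i (?K (\<tau> i)))))"
    by (rule sum.cong) (auto simp: t)
  also have "\<dots> = det ?B * det (mat N N (\<lambda>(i,j). a i (?K j)))"
    by (simp add: det_mat_leibniz sum_distrib_left)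
  finally show ?thesis by (simp add: mult.commute)
qed

lemma part1:
  fixes N :: nat and q \<gamma> s0 \<xi>0 :: complex and u v :: "nat \<Rightarrow> complex"
  assumes "N \<ge> 1"
    and "\<xi>0 \<noteq> 0"
    and "\<forall>i<N. u i \<noteq> 0"
    and "\<forall>i j. i < j \<longrightarrow> j < N \<longrightarrow> u i \<noteq> u j"
    and "\<forall>i j. i < j \<longrightarrow> j < N \<longrightarrow> v i \<noteq> v j"
    and "\<forall>i<N. \<forall>j<N. norm (u i * v j) < 1"
    and "\<forall>i<N. \<forall>j<N. norm (q * u i * v j) < 1"
  shows "((\<lambda>lam. Cfun q \<gamma> s0 \<xi>0 N lam u * schur N lam v) has_sum
           (det (mat N N (\<lambda>(i,j). zfun q \<gamma> s0 \<xi>0 (u i) (v j)))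
             / (vandermonde N u * vandermonde N v))) (Sign N)"
proof -
  define a where "a i k = cfun q \<gamma> s0 \<xi>0 k (u i)" for i k
  define b where "b j k = v j ^ k" for j k :: nat
  define Z where "Z = det (mat N N (\<lambda>(i,j). zfun q \<gamma> s0 \<xi>0 (u i) (v j)))"
  define T where "T \<kappa> = (\<Prod>i<N. a i (\<kappa> i)) * det (mat N N (\<lambda>(i,j). b j (\<kappa> i)))" for \<kappa>
  define P where "P = {\<tau>::nat\<Rightarrow>nat. \<tau> permutes {..<N}}"
  have "(T has_sum Z) (PiE {..<N} (\<lambda>_. UNIV))"
    unfolding T_def Z_def
    by (rule det_series) (use assms in \<open>auto simp: a_def b_def intro!: z_has_sum\<close>)
  then have "(T has_sum Z) (Phi N ` (Sign N \<times> P))"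
    unfolding Phi_image P_def
    by (subst (asm) has_sum_cong_neutral[where T = "{\<kappa> \<in> PiE {..<N} (\<lambda>_. UNIV). inj_on \<kappa> {..<N}}" and g = T])
       (auto simp: T_def det_rows_nonin)
  then have "((T \<circ> Phi N) has_sum Z) (Sign N \<times> P)"
    using has_sum_reindex[OF Phi_inj[of N], of T Z] unfolding P_def by blast
  then have "((\<lambda>lam. \<Sum>\<tau>\<in>P. (T \<circ> Phi N) (lam, \<tau>)) has_sum Z) (Sign N)"
    by (rule has_sum_Sigma') (auto simp: P_def finite_permutations)
  then have "((\<lambda>lam. det (mat N N (\<lambda>(i,j). a i (Kv N lam j))) * det (mat N N (\<lambda>(i,j). b j (Kv N lam i))))
      has_sum Z) (Sign N)"
    by (simp add: P_def T_def fiber_sum)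
  then have "((\<lambda>lam. (1 / (vandermonde N u * vandermonde N v)) *
      (det (mat N N (\<lambda>(i,j). a i (Kv N lam j))) * det (mat N N (\<lambda>(i,j). b j (Kv N lam i)))))
      has_sum ((1 / (vandermonde N u * vandermonde N v)) * Z)) (Sign N)"
    by (rule has_sum_cmult_right)
  moreover have "(1 / (vandermonde N u * vandermonde N v)) *
      (det (mat N N (\<lambda>(i,j). a i (Kv N lam j))) * det (mat N N (\<lambda>(i,j). b j (Kv N lam i))))
      = Cfun q \<gamma> s0 \<xi>0 N lam u * schur N lam v" for lam
  proof -
    have "det (mat N N (\<lambda>(i,j). a i (Kv N lam j))) = det (mat N N (\<lambda>(i,j). a j (Kv N lam i)))"
      by (rule det_mat_transpose_fun[symmetric])
    moreover have "det (mat N N (\<lambda>(i,j). b j (Kv N lam i))) = det (mat N N (\<lambda>(i,j). b i (Kv N lam j)))"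
      by (rule det_mat_transpose_fun)
    ultimately show ?thesis
      unfolding Cfun_def schur_def by (simp add: a_def b_def Kv_def)
  qed
  ultimately show ?thesis by (simp add: Z_def)
qed


theorem mainTheorem10:
  fixes N :: nat and q \<gamma> s0 \<xi>0 :: complex and u v :: "nat \<Rightarrow> complex"
  assumes "N \<ge> 1"
    and "\<xi>0 \<noteq> 0"
    and "\<forall>i<N. u i \<noteq> 0"
    and "\<forall>i j. i < j \<longrightarrow> j < N \<longrightarrow> u i \<noteq> u j"
    and "\<forall>i j. i < j \<longrightarrow> j < N \<longrightarrow> v i \<noteq> v j"
    and "\<forall>i<N. \<forall>j<N. norm (u i * v j) < 1"
    and "\<forall>i<N. \<forall>j<N. norm (q * u i * v j) < 1"
  shows "((\<lambda>lam. Cfun q \<gamma> s0 \<xi>0 N lam u * schur N lam v) has_sum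
           (det (mat N N (\<lambda>(i,j). zfun q \<gamma> s0 \<xi>0 (u i) (v j)))
             / (vandermonde N u * vandermonde N v))) (Sign N)
    \<and> (\<forall>lam\<in>Sign N. Cfun q \<gamma> s0 \<xi>0 N lam u =
           det (mat N N (\<lambda>(i,j).
             - \<gamma> * s0 * inverse \<xi>0 * (1 - q ^ (lam j + (N - 1 - j)))
                 * hcomplete N (int (lam j) + int i - int j - 1) u
             + (1 + \<gamma>^2 * s0^2 - \<gamma> * (q + s0^2) * q ^ (lam j + (N - 1 - j)))
                 * hcomplete N (int (lam j) + int i - int j) u
             - \<gamma> * s0 * \<xi>0 * (1 - q ^ (lam j + (N - 1 - j) + 1))
                 * hcomplete N (int (lam j) + int i - int j + 1) u)))
    \<and> (s0 = 0 \<longrightarrow> (\<forall>lam\<in>Sign N. Cfun q \<gamma> s0 \<xi>0 N lam u =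
           (\<Prod>j<N. (1 - \<gamma> * q * q ^ (lam j + (N - 1 - j)))) * schur N lam u))"
  proof (intro conjI)
  show "((\<lambda>lam. Cfun q \<gamma> s0 \<xi>0 N lam u * schur N lam v) has_sum
           (det (mat N N (\<lambda>(i,j). zfun q \<gamma> s0 \<xi>0 (u i) (v j)))
             / (vandermonde N u * vandermonde N v))) (Sign N)"
    by (rule part1) (use assms in auto)
  show "\<forall>lam\<in>Sign N. Cfun q \<gamma> s0 \<xi>0 N lam u =
           det (mat N N (\<lambda>(i,j).
             - \<gamma> * s0 * inverse \<xi>0 * (1 - q ^ (lam j + (N - 1 - j)))
                 * hcomplete N (int (lam j) + int i - int j - 1) u
             + (1 + \<gamma>^2 * s0^2 - \<gamma> * (q + s0^2) * q ^ (lam j + (N - 1 - j)))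
                 * hcomplete N (int (lam j) + int i - int j) u
             - \<gamma> * s0 * \<xi>0 * (1 - q ^ (lam j + (N - 1 - j) + 1))
                 * hcomplete N (int (lam j) + int i - int j + 1) u))"
    using part2[OF assms(1-4)] by blast
  show "s0 = 0 \<longrightarrow> (\<forall>lam\<in>Sign N. Cfun q \<gamma> s0 \<xi>0 N lam u =
           (\<Prod>j<N. (1 - \<gamma> * q * q ^ (lam j + (N - 1 - j)))) * schur N lam u)"
    using part3 by blast
qed

end
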